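(* Let $m\ge1$ and $[m]=\{1<2<\dots<m\}$. For every poset ideal $\mathcal{J}\subseteq\mathrm{Hom}([m],\mathbb{N})$ the projected letterplace ideal $L^{p_1}(\mathcal{J},[m])$ is a strongly stable ideal of $k[x_1,\dots,x_m]$, and $\mathcal{J}\mapsto L^{p_1}(\mathcal{J},[m])$ is a one-to-one correspondence between poset ideals of $\mathrm{Hom}([m],\mathbb{N})$ and strongly stable ideals of $k[x_1,\dots,x_m]$.
   Context: $\mathbb{N}=\{0,1,2,\dots\}$; $\mathrm{Hom}([m],\mathbb{N})$ is the set of weakly increasing maps $[m]\to\mathbb{N}$ ordered pointwise; $\mathcal{J}^c$ denotes the complement of $\mathcal{J}$. The ascent of $\psi$ is $\Lambda\psi=\{(a,i)\in[m]\times\mathbb{N}:\psi(q)\le i<\psi(a)\ \forall q<a\}$. $k$ is a field; the letterplace ideal $L(\mathcal{J},[m])\subseteq k[x_{a,i}:(a,i)\in[m]\times\mathbb{N}]$ is generated by $\prod_{(a,i)\in\Lambda\psi}x_{a,i}$ for $\psi\in\mathcal{J}^c$. $L^{p_1}(\mathcal{J},[m])$ is the ideal of $k[x_1,\dots,x_m]$ generated by the images of these generators under $x_{a,i}\mapsto x_a$. A monomial ideal $I$ is strongly stable if for every monomial $u$ and $i<j$, $x_ju\in I$ implies $x_iu\in I$. *)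

theory Defs
  imports "HOL-Library.Poly_Mapping"
begin

text \<open>The ring k[x_1,...,x_m] is the subring of
  polynomials all of whose monomials only involve variables 1..m.\<close>

type_synonym 'k mpoly = "(nat \<Rightarrow>\<^sub>0 nat) \<Rightarrow>\<^sub>0 'k"

definition monoms :: "nat \<Rightarrow> (nat \<Rightarrow>\<^sub>0 nat) set" where
  "monoms m = {e. Poly_Mapping.keys e \<subseteq> {1..m}}"

definition Pring :: "nat \<Rightarrow> ('k::comm_ring_1) mpoly set" where
  "Pring m = {p. \<forall>e\<in>Poly_Mapping.keys p. e \<in> monoms m}"

definition mono :: "(nat \<Rightarrow>\<^sub>0 nat) \<Rightarrow> ('k::comm_ring_1) mpoly" where
  "mono e = Poly_Mapping.single e 1"

definition var :: "nat \<Rightarrow> ('k::comm_ring_1) mpoly" where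
  "var a = mono (Poly_Mapping.single a 1)"

definition is_ideal :: "nat \<Rightarrow> ('k::comm_ring_1) mpoly set \<Rightarrow> bool" where
  "is_ideal m I \<longleftrightarrow> I \<subseteq> Pring m \<and> 0 \<in> I \<and> (\<forall>p\<in>I. \<forall>q\<in>I. p + q \<in> I)
     \<and> (\<forall>r\<in>Pring m. \<forall>p\<in>I. r * p \<in> I)"

definition gen_ideal :: "nat \<Rightarrow> ('k::comm_ring_1) mpoly set \<Rightarrow> 'k mpoly set" where
  "gen_ideal m G = \<Inter>{I. is_ideal m I \<and> G \<subseteq> I}"

definition monomial_ideal :: "nat \<Rightarrow> ('k::comm_ring_1) mpoly set \<Rightarrow> bool" where
  "monomial_ideal m I \<longleftrightarrow> is_ideal m I \<and> (\<exists>E \<subseteq> monoms m. I = gen_ideal m (mono ` E))"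

definition strongly_stable :: "nat \<Rightarrow> ('k::comm_ring_1) mpoly set \<Rightarrow> bool" where
  "strongly_stable m I \<longleftrightarrow> monomial_ideal m I \<and>
     (\<forall>u\<in>monoms m. \<forall>i j. 1 \<le> i \<and> i < j \<and> j \<le> m \<longrightarrow>
        var j * mono u \<in> I \<longrightarrow> var i * mono u \<in> I)"

definition Hom :: "nat \<Rightarrow> (nat \<Rightarrow> nat) set" where
  "Hom m = {\<psi>. (\<forall>a b. 1 \<le> a \<and> a \<le> b \<and> b \<le> m \<longrightarrow> \<psi> a \<le> \<psi> b) \<and>
                (\<forall>a. a \<notin> {1..m} \<longrightarrow> \<psi> a = 0)}"

definition poset_ideal :: "nat \<Rightarrow> (nat \<Rightarrow> nat) set \<Rightarrow> bool" where
  "poset_ideal m J \<longleftrightarrow> J \<subseteq> Hom m \<and>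
     (\<forall>\<phi>\<in>J. \<forall>\<psi>\<in>Hom m. (\<forall>a\<in>{1..m}. \<psi> a \<le> \<phi> a) \<longrightarrow> \<psi> \<in> J)"

definition ascent :: "nat \<Rightarrow> (nat \<Rightarrow> nat) \<Rightarrow> (nat \<times> nat) set" where
  "ascent m \<psi> = {(a, i). a \<in> {1..m} \<and> (\<forall>q. 1 \<le> q \<and> q < a \<longrightarrow> \<psi> q \<le> i) \<and> i < \<psi> a}"

text \<open>Image of the letterplace generator prod_{(a,i) in ascent} x_{a,i} under x_{a,i} to x_a.\<close>

definition proj_gen :: "nat \<Rightarrow> (nat \<Rightarrow> nat) \<Rightarrow> ('k::comm_ring_1) mpoly" where
  "proj_gen m \<psi> = (\<Prod>(a, i)\<in>ascent m \<psi>. var a)"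

definition Lp1 :: "nat \<Rightarrow> (nat \<Rightarrow> nat) set \<Rightarrow> ('k::comm_ring_1) mpoly set" where
  "Lp1 m J = gen_ideal m (proj_gen m ` (Hom m - J))"

end

theory Submission
  imports Defs
begin


lemma lookup_mono: "Poly_Mapping.lookup (mono e :: 'k::comm_ring_1 mpoly) k = (if k = e then 1 else 0)"
  by (simp add: mono_def lookup_single when_def)

lemma keys_mono[simp]: "Poly_Mapping.keys (mono e :: 'k::comm_ring_1 mpoly) = {e}"
  by (simp add: mono_def)

lemma mono_mult: "(mono a :: 'k::comm_ring_1 mpoly) * mono b = mono (a + b)"
  by (simp add: mono_def mult_single)

lemma var_mult: "(var j :: 'k::comm_ring_1 mpoly) * mono u = mono (Poly_Mapping.single j 1 + u)"
  by (simp add: var_def mono_mult)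

lemma keys_add_nat: "Poly_Mapping.keys (a + b :: nat \<Rightarrow>\<^sub>0 nat) = Poly_Mapping.keys a \<union> Poly_Mapping.keys b"
  by (auto simp: in_keys_iff lookup_add)

lemma monoms_add: "a \<in> monoms m \<Longrightarrow> b \<in> monoms m \<Longrightarrow> a + b \<in> monoms m"
  by (simp add: monoms_def keys_add_nat)

lemma monoms_zero[simp]: "0 \<in> monoms m"
  by (simp add: monoms_def)

lemma monoms_summand: "a + b \<in> monoms m \<Longrightarrow> a \<in> monoms m"
  by (simp add: monoms_def keys_add_nat)

lemma Pring_add: "p \<in> Pring m \<Longrightarrow> q \<in> Pring m \<Longrightarrow> p + q \<in> Pring m"
proof -
  assume "p \<in> Pring m" "q \<in> Pring m"
  moreover have "Poly_Mapping.keys (p + q) \<subseteq> Poly_Mapping.keys p \<union> Poly_Mapping.keys q" by (rule keys_add)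
  ultimately show ?thesis unfolding Pring_def by blast
qed

lemma Pring_mult: "p \<in> Pring m \<Longrightarrow> q \<in> Pring m \<Longrightarrow> p * q \<in> Pring m"
  unfolding Pring_def using keys_mult monoms_add by blast

lemma Pring_zero[simp]: "0 \<in> Pring m"
  by (simp add: Pring_def)

lemma mono_Pring: "e \<in> monoms m \<Longrightarrow> (mono e :: 'k::comm_ring_1 mpoly) \<in> Pring m"
  by (simp add: Pring_def)

lemma const_Pring: "(Poly_Mapping.single 0 c :: 'k::comm_ring_1 mpoly) \<in> Pring m"
  by (simp add: Pring_def)

lemma Pring_ideal: "is_ideal m (Pring m)"
  by (simp add: is_ideal_def Pring_add Pring_mult)

lemma gen_ideal_is_ideal:
  assumes "G \<subseteq> Pring m" shows "is_ideal m (gen_ideal m G)"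
proof -
  have ne: "Pring m \<in> {I. is_ideal m I \<and> G \<subseteq> I}" using assms Pring_ideal by auto
  have 1: "gen_ideal m G \<subseteq> Pring m" using ne unfolding gen_ideal_def by blast
  have 2: "0 \<in> gen_ideal m G" unfolding gen_ideal_def is_ideal_def by blast
  have 3: "\<forall>p\<in>gen_ideal m G. \<forall>q\<in>gen_ideal m G. p + q \<in> gen_ideal m G"
    unfolding gen_ideal_def is_ideal_def by blast
  have 4: "\<forall>r\<in>Pring m. \<forall>p\<in>gen_ideal m G. r * p \<in> gen_ideal m G"
    unfolding gen_ideal_def is_ideal_def by blast
  show ?thesis using 1 2 3 4 unfolding is_ideal_def by blast
qed

lemma gen_ideal_sub: "G \<subseteq> gen_ideal m G"
  by (auto simp: gen_ideal_def)

lemma gen_ideal_least: "is_ideal m I \<Longrightarrow> G \<subseteq> I \<Longrightarrow> gen_ideal m G \<subseteq> I"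
  by (auto simp: gen_ideal_def)

definition MI :: "nat \<Rightarrow> (nat \<Rightarrow>\<^sub>0 nat) set \<Rightarrow> ('k::comm_ring_1) mpoly set" where
  "MI m E = {p \<in> Pring m. \<forall>k\<in>Poly_Mapping.keys p. \<exists>e\<in>E. \<exists>d. k = d + e}"

lemma MI_ideal: "is_ideal m (MI m E :: 'k::comm_ring_1 mpoly set)"
  unfolding is_ideal_def
proof (intro conjI ballI)
  show "MI m E \<subseteq> Pring m" by (auto simp: MI_def)
  show "0 \<in> MI m E" by (simp add: MI_def)
next
  fix p q :: "'k mpoly" assume p: "p \<in> MI m E" and q: "q \<in> MI m E"
  have "Poly_Mapping.keys (p + q) \<subseteq> Poly_Mapping.keys p \<union> Poly_Mapping.keys q" by (rule keys_add)
  moreover have "p + q \<in> Pring m" using p q Pring_add by (auto simp: MI_def)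
  ultimately show "p + q \<in> MI m E" using p q unfolding MI_def by blast
next
  fix r p :: "'k mpoly" assume r: "r \<in> Pring m" and p: "p \<in> MI m E"
  have "r * p \<in> Pring m" using r p Pring_mult by (auto simp: MI_def)
  moreover have "\<exists>e\<in>E. \<exists>d. k = d + e" if k: "k \<in> Poly_Mapping.keys (r * p)" for k
  proof -
    obtain a b where ab: "k = a + b" "b \<in> Poly_Mapping.keys p" using keys_mult k by blast
    then obtain e d where "e \<in> E" "b = d + e" using p by (auto simp: MI_def)
    then show ?thesis using ab by (metis add.assoc)
  qed
  ultimately show "r * p \<in> MI m E" by (simp add: MI_def)
qed

lemma gen_ideal_MI: "E \<subseteq> monoms m \<Longrightarrow> gen_ideal m (mono ` E) \<subseteq> (MI m E :: 'k::comm_ring_1 mpoly set)"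
  apply (rule gen_ideal_least[OF MI_ideal])
  apply (auto simp: MI_def mono_Pring intro!: exI[of _ 0])
  done

lemma ideal_sum: "finite A \<Longrightarrow> is_ideal m I \<Longrightarrow> (\<forall>a\<in>A. f a \<in> I) \<Longrightarrow> sum f A \<in> I"
  by (induction A rule: finite_induct) (auto simp: is_ideal_def)

lemma poly_expansion: "p = (\<Sum>k\<in>Poly_Mapping.keys p. Poly_Mapping.single k (Poly_Mapping.lookup p k))"
proof -
  have *: "finite I \<Longrightarrow> Poly_Mapping.lookup (\<Sum>i\<in>I. Poly_Mapping.single i (Poly_Mapping.lookup p i)) j =
            (if j \<in> I then Poly_Mapping.lookup p j else 0)" for I j
    by (induction I rule: finite_induct) (auto simp: lookup_single lookup_add when_def)
  show ?thesis
    by (rule poly_mapping_eqI) (simp add: in_keys_iff *)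
qed

lemma ideal_from_monos:
  assumes I: "is_ideal m I" and p: "p \<in> Pring m" and k: "\<forall>k\<in>Poly_Mapping.keys p. (mono k :: 'k::comm_ring_1 mpoly) \<in> I"
  shows "p \<in> I"
proof -
  have "Poly_Mapping.single k (Poly_Mapping.lookup p k) \<in> I" if "k \<in> Poly_Mapping.keys p" for k
  proof -
    have "Poly_Mapping.single 0 (Poly_Mapping.lookup p k) * mono k \<in> I"
      using I k that const_Pring unfolding is_ideal_def by blast
    then show ?thesis by (simp add: mono_def mult_single)
  qed
  then have "(\<Sum>k\<in>Poly_Mapping.keys p. Poly_Mapping.single k (Poly_Mapping.lookup p k)) \<in> I"
    by (intro ideal_sum[OF _ I]) auto
  then show ?thesis using poly_expansion[of p] by simp
qed

lemma monomial_ideal_keys: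
  assumes I: "monomial_ideal m I" and p: "p \<in> I" and k: "k \<in> Poly_Mapping.keys p"
  shows "(mono k :: 'k::comm_ring_1 mpoly) \<in> I"
proof -
  obtain E where E: "E \<subseteq> monoms m" "I = gen_ideal m (mono ` E)" and id: "is_ideal m I"
    using I by (auto simp: monomial_ideal_def)
  have "p \<in> MI m E" using gen_ideal_MI[OF E(1)] E(2) p by blast
  then obtain e d where ed: "e \<in> E" "k = d + e" and "p \<in> Pring m" using k by (auto simp: MI_def)
  then have "k \<in> monoms m" using k by (auto simp: Pring_def)
  then have "d \<in> monoms m" using ed monoms_summand by blast
  moreover have "mono e \<in> I" using E ed gen_ideal_sub by blast
  ultimately have "mono d * mono e \<in> I" using id mono_Pring unfolding is_ideal_def by blast
  then show ?thesis by (simp add: mono_mult ed)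
qed

lemma monomial_ideal_eq:
  assumes I: "monomial_ideal m I" and I': "monomial_ideal m I'"
    and eq: "\<forall>v\<in>monoms m. ((mono v :: 'k::comm_ring_1 mpoly) \<in> I) = (mono v \<in> I')"
  shows "I = I'"
proof -
  have sub: "I1 \<subseteq> I2" if I1: "monomial_ideal m I1" and I2: "monomial_ideal m I2"
      and eq: "\<forall>v\<in>monoms m. ((mono v :: 'k mpoly) \<in> I1) \<longrightarrow> (mono v \<in> I2)" for I1 I2
  proof
    fix p assume p: "p \<in> I1"
    have pP: "p \<in> Pring m" using I1 p by (auto simp: monomial_ideal_def is_ideal_def)
    show "p \<in> I2"
    proof (rule ideal_from_monos)
      show "is_ideal m I2" using I2 by (simp add: monomial_ideal_def)
      show "p \<in> Pring m" by (rule pP)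
      show "\<forall>k\<in>Poly_Mapping.keys p. mono k \<in> I2"
        using monomial_ideal_keys[OF I1 p] eq pP by (auto simp: Pring_def)
    qed
  qed
  show ?thesis using sub[OF I I'] sub[OF I' I] eq by blast
qed



definition ue :: "nat \<Rightarrow> (nat \<Rightarrow> nat) \<Rightarrow> (nat \<Rightarrow>\<^sub>0 nat)" where
  "ue m \<psi> = (\<Sum>x\<in>ascent m \<psi>. Poly_Mapping.single (fst x) 1)"

definition psi_of :: "nat \<Rightarrow> (nat \<Rightarrow>\<^sub>0 nat) \<Rightarrow> nat \<Rightarrow> nat" where
  "psi_of m v = (\<lambda>a. if a \<in> {1..m} then (\<Sum>b=1..a. Poly_Mapping.lookup v b) else 0)"

lemma finite_ascent: "finite (ascent m \<psi>)"
proof -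
  have "ascent m \<psi> \<subseteq> (SIGMA a:{1..m}. {..<\<psi> a})" by (auto simp: ascent_def)
  then show ?thesis by (rule finite_subset) auto
qed

lemma prod_var: "finite S \<Longrightarrow> (\<Prod>x\<in>S. (var (f x) :: 'k::comm_ring_1 mpoly)) = mono (\<Sum>x\<in>S. Poly_Mapping.single (f x) 1)"
proof (induction S rule: finite_induct)
  case empty then show ?case by (simp add: mono_def)
next
  case (insert x F) then show ?case by (simp add: var_mult)
qed

lemma proj_gen_eq: "(proj_gen m \<psi> :: 'k::comm_ring_1 mpoly) = mono (ue m \<psi>)"
proof -
  have "(proj_gen m \<psi> :: 'k mpoly) = (\<Prod>x\<in>ascent m \<psi>. var (fst x))"
    unfolding proj_gen_def by (simp add: case_prod_beta)
  then show ?thesis using prod_var[OF finite_ascent] by (simp add: ue_def)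
qed

lemma Hom_zero: "\<psi> \<in> Hom m \<Longrightarrow> \<psi> 0 = 0"
  by (simp add: Hom_def)

lemma Hom_out: "\<psi> \<in> Hom m \<Longrightarrow> a \<notin> {1..m} \<Longrightarrow> \<psi> a = 0"
  by (simp add: Hom_def)

lemma Hom_mono: "\<psi> \<in> Hom m \<Longrightarrow> a \<le> b \<Longrightarrow> b \<le> m \<Longrightarrow> \<psi> a \<le> \<psi> b"
  by (cases "a = 0") (auto simp: Hom_def)


lemma lookup_ue_sum: "Poly_Mapping.lookup (ue m \<psi>) b = (\<Sum>x\<in>ascent m \<psi>. if fst x = b then 1 else 0)"
  unfolding ue_def lookup_sum lookup_single when_def by (rule sum.cong) auto

lemma lookup_ue_gen: "Poly_Mapping.lookup (ue m \<psi>) b = card {x \<in> ascent m \<psi>. fst x = b}"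
proof -
  have "Poly_Mapping.lookup (ue m \<psi>) b = (\<Sum>x\<in>ascent m \<psi>. if fst x = b then 1 else 0)"
    by (rule lookup_ue_sum)
  also have "\<dots> = (\<Sum>x\<in>{x \<in> ascent m \<psi>. fst x = b}. 1)"
    using sum.inter_filter[where A="ascent m \<psi>" and g="\<lambda>_. 1::nat" and P="\<lambda>x. fst x = b"] finite_ascent by simp
  also have "\<dots> = card {x \<in> ascent m \<psi>. fst x = b}" by simp
  finally show ?thesis .
qed

lemma lookup_ue: assumes "\<psi> \<in> Hom m"
  shows "Poly_Mapping.lookup (ue m \<psi>) b = (if b \<in> {1..m} then \<psi> b - \<psi> (b - 1) else 0)"
proof (cases "b \<in> {1..m}")
  case True
  have "{x \<in> ascent m \<psi>. fst x = b} = {b} \<times> {\<psi> (b - 1)..<\<psi> b}"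
  proof (intro set_eqI iffI)
    fix x assume "x \<in> {x \<in> ascent m \<psi>. fst x = b}"
    then obtain i where x: "x = (b, i)" "\<forall>q. 1 \<le> q \<and> q < b \<longrightarrow> \<psi> q \<le> i" "i < \<psi> b"
      by (auto simp: ascent_def)
    have "\<psi> (b - 1) \<le> i"
    proof (cases "b = 1")
      case True then show ?thesis using Hom_zero[OF assms] by simp
    next
      case False then show ?thesis using x True by auto
    qed
    then show "x \<in> {b} \<times> {\<psi> (b - 1)..<\<psi> b}" using x by auto
  next
    fix x assume "x \<in> {b} \<times> {\<psi> (b - 1)..<\<psi> b}"
    then obtain i where x: "x = (b, i)" "\<psi> (b - 1) \<le> i" "i < \<psi> b" by auto
    have "\<psi> q \<le> i" if "1 \<le> q" "q < b" for q
    proof -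
      have "\<psi> q \<le> \<psi> (b - 1)" using Hom_mono[OF assms, of q "b - 1"] that True by auto
      then show ?thesis using x by linarith
    qed
    then show "x \<in> {x \<in> ascent m \<psi>. fst x = b}" using x True by (auto simp: ascent_def)
  qed
  then show ?thesis using True unfolding lookup_ue_gen by simp
next
  case False
  then have e: "{x \<in> ascent m \<psi>. fst x = b} = {}" by (auto simp: ascent_def)
  then show ?thesis unfolding lookup_ue_gen e if_not_P[OF False] by simp
qed

lemma ue_monoms: "ue m \<psi> \<in> monoms m"
proof -
  have "b \<in> {1..m}" if "b \<in> Poly_Mapping.keys (ue m \<psi>)" for b
  proof (rule ccontr)
    assume "b \<notin> {1..m}"
    then have "{x \<in> ascent m \<psi>. fst x = b} = {}" by (auto simp: ascent_def)
    then have "Poly_Mapping.lookup (ue m \<psi>) b = 0" unfolding lookup_ue_gen by (simp only: card.empty)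
    then show False using that by (simp add: in_keys_iff)
  qed
  then show ?thesis by (auto simp: monoms_def)
qed

lemma psi_of_Hom: "psi_of m v \<in> Hom m"
  unfolding Hom_def psi_of_def by (auto intro!: sum_mono2)

lemma psi_of_ue: assumes "\<psi> \<in> Hom m" shows "psi_of m (ue m \<psi>) = \<psi>"
proof
  fix a
  have "a \<le> m \<Longrightarrow> (\<Sum>b=1..a. Poly_Mapping.lookup (ue m \<psi>) b) = \<psi> a" for a
  proof (induction a)
    case 0 then show ?case using Hom_zero[OF assms] by simp
  next
    case (Suc a)
    have "\<psi> a \<le> \<psi> (Suc a)" using Hom_mono[OF assms, of a "Suc a"] Suc by simp
    then show ?case using Suc by (simp add: lookup_ue[OF assms])
  qed
  then show "psi_of m (ue m \<psi>) a = \<psi> a" using Hom_out[OF assms] by (auto simp: psi_of_def)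
qed

lemma ue_psi_of: assumes "v \<in> monoms m" shows "ue m (psi_of m v) = v"
proof (rule poly_mapping_eqI)
  fix b
  show "Poly_Mapping.lookup (ue m (psi_of m v)) b = Poly_Mapping.lookup v b"
  proof (cases "b \<in> {1..m}")
    case True
    show ?thesis
    proof (cases "b = 1")
      case True then show ?thesis using \<open>b \<in> {1..m}\<close>
        unfolding lookup_ue[OF psi_of_Hom] by (simp add: psi_of_def)
    next
      case False
      then obtain c where c: "b = Suc c" "c \<ge> 1" using True by (cases b) auto
      then show ?thesis using True unfolding lookup_ue[OF psi_of_Hom] by (simp add: psi_of_def)
    qed
  next
    case False
    then have "b \<notin> Poly_Mapping.keys v" using assms by (auto simp: monoms_def)
    then show ?thesis unfolding lookup_ue[OF psi_of_Hom] if_not_P[OF False] by (simp add: in_keys_iff)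
  qed
qed

lemma psi_of_le: "(\<And>b. Poly_Mapping.lookup u b \<le> Poly_Mapping.lookup v b) \<Longrightarrow> psi_of m u a \<le> psi_of m v a"
  by (auto simp: psi_of_def intro!: sum_mono)



lemma gens_eq: "proj_gen m ` (Hom m - J) = (mono ` (ue m ` (Hom m - J)) :: 'k::comm_ring_1 mpoly set)"
  by (auto simp: proj_gen_eq image_image)

lemma Lp1_monomial: "monomial_ideal m (Lp1 m J :: 'k::comm_ring_1 mpoly set)"
proof -
  have E: "ue m ` (Hom m - J) \<subseteq> monoms m" using ue_monoms by blast
  have L: "(Lp1 m J :: 'k mpoly set) = gen_ideal m (mono ` (ue m ` (Hom m - J)))"
    unfolding Lp1_def gens_eq ..
  have "is_ideal m (Lp1 m J :: 'k mpoly set)"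
    unfolding L by (rule gen_ideal_is_ideal) (use E mono_Pring in blast)
  then show ?thesis unfolding monomial_ideal_def using E L by blast
qed

lemma mono_in_Lp:
  assumes J: "poset_ideal m J" and v: "v \<in> monoms m"
  shows "((mono v :: 'k::comm_ring_1 mpoly) \<in> Lp1 m J) = (psi_of m v \<notin> J)"
proof
  assume "psi_of m v \<notin> J"
  then have h: "psi_of m v \<in> Hom m - J" by (simp add: psi_of_Hom)
  have "(proj_gen m (psi_of m v) :: 'k mpoly) \<in> Lp1 m J"
    unfolding Lp1_def using gen_ideal_sub imageI[OF h] by (rule subsetD)
  then show "(mono v :: 'k mpoly) \<in> Lp1 m J" by (simp add: proj_gen_eq ue_psi_of[OF v])
next
  assume mv: "(mono v :: 'k mpoly) \<in> Lp1 m J"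
  have E: "ue m ` (Hom m - J) \<subseteq> monoms m" using ue_monoms by blast
  have "(mono v :: 'k mpoly) \<in> MI m (ue m ` (Hom m - J))"
    using gen_ideal_MI[OF E] mv unfolding Lp1_def gens_eq by blast
  then obtain \<phi> d where phi: "\<phi> \<in> Hom m - J" "v = d + ue m \<phi>" by (auto simp: MI_def)
  show "psi_of m v \<notin> J"
  proof
    assume pJ: "psi_of m v \<in> J"
    have "\<forall>a\<in>{1..m}. \<phi> a \<le> psi_of m v a"
    proof
      fix a
      have "psi_of m (ue m \<phi>) a \<le> psi_of m v a"
        by (rule psi_of_le) (simp add: phi(2) lookup_add)
      then show "\<phi> a \<le> psi_of m v a" using psi_of_ue[of \<phi> m] phi(1) by simp
    qed
    then have "\<phi> \<in> J" using J pJ phi(1) unfolding poset_ideal_def by blast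
    then show False using phi(1) by blast
  qed
qed

lemma psi_of_single: "psi_of m (Poly_Mapping.single i 1 + u) a
   = psi_of m u a + (if a \<in> {1..m} \<and> 1 \<le> i \<and> i \<le> a then 1 else 0)"
  by (auto simp: psi_of_def lookup_add sum.distrib lookup_single when_def)

lemma psi_of_single': "psi_of m (Poly_Mapping.single i (Suc 0) + u) a
   = psi_of m u a + (if a \<in> {1..m} \<and> 1 \<le> i \<and> i \<le> a then 1 else 0)"
  using psi_of_single[of m i u a] by (simp only: One_nat_def)

lemma Lp1_ss: assumes J: "poset_ideal m J" shows "strongly_stable m (Lp1 m J :: 'k::comm_ring_1 mpoly set)"
  unfolding strongly_stable_def
proof (intro conjI ballI allI impI)
  show "monomial_ideal m (Lp1 m J :: 'k mpoly set)" by (rule Lp1_monomial)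
next
  fix u i j assume u: "u \<in> monoms m" and ij: "1 \<le> i \<and> i < j \<and> j \<le> m"
    and inI: "(var j :: 'k mpoly) * mono u \<in> Lp1 m J"
  have mj: "Poly_Mapping.single j 1 + u \<in> monoms m"
    using u ij by (intro monoms_add) (auto simp: monoms_def)
  have mi: "Poly_Mapping.single i 1 + u \<in> monoms m"
    using u ij by (intro monoms_add) (auto simp: monoms_def)
  have nj: "psi_of m (Poly_Mapping.single j 1 + u) \<notin> J"
  proof -
    have "(mono (Poly_Mapping.single j 1 + u) :: 'k mpoly) \<in> Lp1 m J" using inI by (simp only: var_mult)
    then show ?thesis by (simp only: mono_in_Lp[OF J mj] not_False_eq_True)
  qed
  have le: "\<forall>a\<in>{1..m}. psi_of m (Poly_Mapping.single j 1 + u) a \<le> psi_of m (Poly_Mapping.single i 1 + u) a"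
    using ij by (auto simp: psi_of_single psi_of_single')
  have "psi_of m (Poly_Mapping.single i 1 + u) \<notin> J"
  proof
    assume "psi_of m (Poly_Mapping.single i 1 + u) \<in> J"
    then have "psi_of m (Poly_Mapping.single j 1 + u) \<in> J"
      using J le psi_of_Hom[of m "Poly_Mapping.single j 1 + u"] unfolding poset_ideal_def by blast
    then show False using nj by contradiction
  qed
  then show "(var i :: 'k mpoly) * mono u \<in> Lp1 m J"
    by (simp only: var_mult mono_in_Lp[OF J mi] not_False_eq_True)
qed



lemma Hom_pred: "\<psi> \<in> Hom m \<Longrightarrow> c \<le> m \<Longrightarrow> \<psi> (c - 1) \<le> \<psi> c"
  by (rule Hom_mono) auto

lemma step:
  assumes ss: "strongly_stable m (I :: 'k::comm_ring_1 mpoly set)" and psi: "\<psi> \<in> Hom m"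
    and b: "b \<in> {1..m}" and psi': "\<psi>(b := Suc (\<psi> b)) \<in> Hom m"
    and inI: "mono (ue m \<psi>) \<in> I"
  shows "mono (ue m (\<psi>(b := Suc (\<psi> b)))) \<in> I"
proof -
  let ?p = "\<psi>(b := Suc (\<psi> b))"
  have id: "is_ideal m I" using ss by (simp add: strongly_stable_def monomial_ideal_def)
  show ?thesis
  proof (cases "b = m")
    case True
    have pm: "\<psi> (m - 1) \<le> \<psi> m" using Hom_pred[OF psi] by simp
    have eq: "ue m ?p = Poly_Mapping.single m 1 + ue m \<psi>"
    proof (rule poly_mapping_eqI)
      fix c
      show "Poly_Mapping.lookup (ue m ?p) c = Poly_Mapping.lookup (Poly_Mapping.single m 1 + ue m \<psi>) c"
        unfolding lookup_ue[OF psi'] lookup_ue[OF psi] lookup_add lookup_single when_def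
        using True b pm Hom_pred[OF psi, of c] by auto
    qed
    have vm: "(var m :: 'k mpoly) \<in> Pring m"
      unfolding var_def using b True by (intro mono_Pring) (auto simp: monoms_def)
    have "(var m :: 'k mpoly) * mono (ue m \<psi>) \<in> I" using id vm inI unfolding is_ideal_def by blast
    then show ?thesis unfolding var_mult eq .
  next
    case False
    then have bm: "b < m" using b by auto
    have "?p b \<le> ?p (Suc b)" using Hom_mono[OF psi', of b "Suc b"] bm by simp
    then have lt: "\<psi> b < \<psi> (Suc b)" by simp
    have pb: "\<psi> (b - 1) \<le> \<psi> b" using Hom_pred[OF psi] b by simp
    define u where "u = ue m \<psi> - Poly_Mapping.single (Suc b) 1"
    have e1: "ue m \<psi> = Poly_Mapping.single (Suc b) 1 + u"
    proof (rule poly_mapping_eqI)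
      fix c
      show "Poly_Mapping.lookup (ue m \<psi>) c = Poly_Mapping.lookup (Poly_Mapping.single (Suc b) 1 + u) c"
        unfolding u_def lookup_add lookup_minus unfolding lookup_ue[OF psi] lookup_single when_def
        using lt bm by auto
    qed
    have e2: "ue m ?p = Poly_Mapping.single b 1 + u"
    proof (rule poly_mapping_eqI)
      fix c
      show "Poly_Mapping.lookup (ue m ?p) c = Poly_Mapping.lookup (Poly_Mapping.single b 1 + u) c"
        unfolding u_def lookup_add lookup_minus unfolding lookup_ue[OF psi'] lookup_ue[OF psi] lookup_single when_def
        using lt bm b pb by auto
    qed
    have um: "u \<in> monoms m"
      using ue_monoms[of m \<psi>] unfolding e1 by (metis add.commute monoms_summand)
    have "(var (Suc b) :: 'k mpoly) * mono u \<in> I" using inI unfolding e1 var_mult .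
    then have "(var b :: 'k mpoly) * mono u \<in> I"
    proof -
      have st: "\<forall>u\<in>monoms m. \<forall>i j. 1 \<le> i \<and> i < j \<and> j \<le> m \<longrightarrow>
        (var j :: 'k mpoly) * mono u \<in> I \<longrightarrow> var i * mono u \<in> I" using ss unfolding strongly_stable_def by (rule conjunct2)
      have "1 \<le> b \<and> b < Suc b \<and> Suc b \<le> m" using b bm by simp
      then show ?thesis using st um \<open>(var (Suc b) :: 'k mpoly) * mono u \<in> I\<close> by blast
    qed
    then show ?thesis unfolding e2 var_mult .
  qed
qed



lemma chain:
  assumes ss: "strongly_stable m (I :: 'k::comm_ring_1 mpoly set)" and phi: "\<phi> \<in> Hom m"
  shows "\<psi> \<in> Hom m \<Longrightarrow> (\<forall>a\<in>{1..m}. \<psi> a \<le> \<phi> a) \<Longrightarrow> (\<Sum>a\<in>{1..m}. \<phi> a - \<psi> a) = n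
     \<Longrightarrow> mono (ue m \<psi>) \<in> I \<Longrightarrow> mono (ue m \<phi>) \<in> I"
proof (induction n arbitrary: \<psi> rule: less_induct)
  case (less n \<psi>)
  note psi = less.prems(1) and le = less.prems(2) and sn = less.prems(3) and inI = less.prems(4)
  show ?case
  proof (cases "\<forall>a\<in>{1..m}. \<psi> a = \<phi> a")
    case True
    have "\<psi> = \<phi>"
    proof
      fix a show "\<psi> a = \<phi> a" using True Hom_out[OF psi, of a] Hom_out[OF phi, of a] by (cases "a \<in> {1..m}") auto
    qed
    then show ?thesis using inI by simp
  next
    case False
    define S where "S = {a \<in> {1..m}. \<psi> a < \<phi> a}"
    have fS: "finite S" and neS: "S \<noteq> {}" using False le unfolding S_def by (auto simp: le_less)
    define b where "b = Max S"
    have bS: "b \<in> S" using fS neS unfolding b_def by (rule Max_in)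
    have bmax: "\<And>a. a \<in> S \<Longrightarrow> a \<le> b" using fS unfolding b_def by (rule Max_ge)
    have b: "b \<in> {1..m}" and blt: "\<psi> b < \<phi> b" using bS unfolding S_def by auto
    have eqabove: "\<psi> a = \<phi> a" if "b < a" "a \<le> m" for a
    proof -
      have "a \<notin> S" using bmax that by force
      moreover have a1: "a \<in> {1..m}" using that b by auto
      ultimately have "\<not> \<psi> a < \<phi> a" unfolding S_def by blast
      moreover have "\<psi> a \<le> \<phi> a" using le a1 by blast
      ultimately show ?thesis by linarith
    qed
    let ?p = "\<psi>(b := Suc (\<psi> b))"
    have p: "?p \<in> Hom m"
      unfolding Hom_def
    proof (intro CollectI conjI allI impI)
      fix x y assume xy: "1 \<le> x \<and> x \<le> y \<and> y \<le> m"
      show "?p x \<le> ?p y"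
      proof (cases "x = b")
        case True
        show ?thesis
        proof (cases "y = b")
          case False
          then have "b < y" using xy True by auto
          then have "\<psi> y = \<phi> y" using eqabove xy by auto
          moreover have "\<phi> b \<le> \<phi> y" using Hom_mono[OF phi, of b y] xy True by auto
          ultimately show ?thesis using True False blt by simp
        qed (use True in simp)
      next
        case False
        have "\<psi> x \<le> \<psi> y" using Hom_mono[OF psi, of x y] xy by auto
        then show ?thesis using False by auto
      qed
    next
      fix a assume "a \<notin> {1..m}"
      then show "?p a = 0" using b Hom_out[OF psi, of a] by auto
    qed
    have ple: "\<forall>a\<in>{1..m}. ?p a \<le> \<phi> a" using le blt by auto
    have sum_eq: "(\<Sum>a\<in>{1..m}. \<phi> a - \<psi> a) = Suc (\<Sum>a\<in>{1..m}. \<phi> a - ?p a)"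
    proof -
      have "(\<Sum>a\<in>{1..m}. \<phi> a - \<psi> a) = (\<phi> b - \<psi> b) + (\<Sum>a\<in>{1..m} - {b}. \<phi> a - \<psi> a)"
        using b by (simp add: sum.remove)
      moreover have "(\<Sum>a\<in>{1..m}. \<phi> a - ?p a) = (\<phi> b - ?p b) + (\<Sum>a\<in>{1..m} - {b}. \<phi> a - ?p a)"
        using b by (simp add: sum.remove)
      moreover have "(\<Sum>a\<in>{1..m} - {b}. \<phi> a - ?p a) = (\<Sum>a\<in>{1..m} - {b}. \<phi> a - \<psi> a)"
        by (rule sum.cong) auto
      ultimately show ?thesis using blt by simp
    qed
    have mI: "mono (ue m ?p) \<in> I" using step[OF ss psi b p inI] .
    have lt: "(\<Sum>a\<in>{1..m}. \<phi> a - ?p a) < n" using sn sum_eq by simp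
    show ?thesis by (rule less.IH[OF lt p ple refl mI])
  qed
qed

lemma mem_J: assumes J: "poset_ideal m J"
  shows "(\<psi> \<in> J) = (\<psi> \<in> Hom m \<and> (mono (ue m \<psi>) :: 'k::comm_ring_1 mpoly) \<notin> Lp1 m J)"
proof (cases "\<psi> \<in> Hom m")
  case True
  have "((mono (ue m \<psi>) :: 'k mpoly) \<in> Lp1 m J) = (psi_of m (ue m \<psi>) \<notin> J)"
    by (rule mono_in_Lp[OF J ue_monoms])
  then show ?thesis using True psi_of_ue[OF True] by simp
next
  case False
  then show ?thesis using J unfolding poset_ideal_def by blast
qed

theorem theorem6p1:
  fixes m :: nat
  assumes "m \<ge> 1"
  shows "(\<forall>J. poset_ideal m J \<longrightarrow> strongly_stable m (Lp1 m J :: ('k::field) mpoly set))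
    \<and> bij_betw (\<lambda>J. Lp1 m J :: 'k mpoly set) {J. poset_ideal m J} {I. strongly_stable m I}"
proof (intro conjI allI impI)
  fix J assume "poset_ideal m J"
  then show "strongly_stable m (Lp1 m J :: 'k mpoly set)" by (rule Lp1_ss)
next
  show "bij_betw (\<lambda>J. Lp1 m J :: 'k mpoly set) {J. poset_ideal m J} {I. strongly_stable m I}"
    unfolding bij_betw_def
  proof (intro conjI)
    show "inj_on (\<lambda>J. Lp1 m J :: 'k mpoly set) {J. poset_ideal m J}"
    proof (rule inj_onI)
      fix J1 J2 assume J1: "J1 \<in> {J. poset_ideal m J}" and J2: "J2 \<in> {J. poset_ideal m J}"
        and eq: "(Lp1 m J1 :: 'k mpoly set) = Lp1 m J2"
      show "J1 = J2"
      proof (rule set_eqI)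
        fix \<psi>
        show "(\<psi> \<in> J1) = (\<psi> \<in> J2)"
          using mem_J[of m J1 \<psi>, where 'k='k] mem_J[of m J2 \<psi>, where 'k='k] J1 J2 eq by simp
      qed
    qed
  next
    show "(\<lambda>J. Lp1 m J :: 'k mpoly set) ` {J. poset_ideal m J} = {I. strongly_stable m I}"
    proof (intro set_eqI iffI)
      fix I assume "I \<in> (\<lambda>J. Lp1 m J :: 'k mpoly set) ` {J. poset_ideal m J}"
      then show "I \<in> {I. strongly_stable m I}" using Lp1_ss by auto
    next
      fix I :: "'k mpoly set" assume "I \<in> {I. strongly_stable m I}"
      then have ss: "strongly_stable m I" by simp
      define J where "J = {\<psi> \<in> Hom m. mono (ue m \<psi>) \<notin> I}"
      have PJ: "poset_ideal m J"
        unfolding poset_ideal_def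
      proof (intro conjI ballI impI)
        show "J \<subseteq> Hom m" unfolding J_def by blast
      next
        fix \<phi> \<psi> assume phi: "\<phi> \<in> J" and psi: "\<psi> \<in> Hom m" and le: "\<forall>a\<in>{1..m}. \<psi> a \<le> \<phi> a"
        have pH: "\<phi> \<in> Hom m" using phi unfolding J_def by blast
        have "mono (ue m \<psi>) \<notin> I"
        proof
          assume "mono (ue m \<psi>) \<in> I"
          then have "mono (ue m \<phi>) \<in> I" using chain[OF ss pH psi le refl] by blast
          then show False using phi unfolding J_def by blast
        qed
        then show "\<psi> \<in> J" using psi unfolding J_def by blast
      qed
      have "(Lp1 m J :: 'k mpoly set) = I"
      proof (rule monomial_ideal_eq)
        show "monomial_ideal m (Lp1 m J :: 'k mpoly set)" by (rule Lp1_monomial)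
        show "monomial_ideal m I" using ss by (simp add: strongly_stable_def)
        show "\<forall>v\<in>monoms m. ((mono v :: 'k mpoly) \<in> Lp1 m J) = (mono v \<in> I)"
        proof
          fix v assume v: "v \<in> monoms m"
          have "((mono v :: 'k mpoly) \<in> Lp1 m J) = (psi_of m v \<notin> J)" by (rule mono_in_Lp[OF PJ v])
          also have "\<dots> = (mono (ue m (psi_of m v)) \<in> I)" unfolding J_def using psi_of_Hom by blast
          also have "\<dots> = (mono v \<in> I)" by (simp only: ue_psi_of[OF v])
          finally show "((mono v :: 'k mpoly) \<in> Lp1 m J) = (mono v \<in> I)" .
        qed
      qed
      then show "I \<in> (\<lambda>J. Lp1 m J :: 'k mpoly set) ` {J. poset_ideal m J}" using PJ by blast
    qed
  qed
qed


end
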